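(* Let $U$ be a Hilbert space, $H: U \rightrightarrows U$ with $H^{-1}(0)\ne\emptyset$, and for each $i\in\mathbb{N}$ let $V'_{i+1}: U \to U$ and $M_{i+1}, W_{i+1}, Z_{i+1}, \Xi_{i+1} \in \mathcal{L}(U;U)$ with $Z_{i+1}M_{i+1}$ self-adjoint and $Z_{i+1}M_{i+1} \ge 0$. Let $(u^i)_{i\in\mathbb{N}}\subset U$ satisfy \[ 0 \in W_{i+1}H(u^{i+1}) + V'_{i+1}(u^{i+1}) + M_{i+1}(u^{i+1}-u^i) \quad (i\in\mathbb{N}). \] Let $\hat u \in H^{-1}(0)$ and suppose that for every $i$, $H$ is $(Z_{i+1}\Xi_{i+1}, 2Z_{i+1}W_{i+1}, Z_{i+2}M_{i+2})$-partially strongly submonotone at $(\hat u, 0)$, with a neighbourhood $\mathcal{U}$ of $\hat u$ (common to all $i$). Suppose also that for every $i\in\mathbb{N}$ there is $\Delta_{i+1}\in\mathbb{R}$ such that for all $u^* \in H^{-1}(0)$, \[ \tfrac12\|u^{i+1}-u^i\|^2_{Z_{i+1}M_{i+1}} + \tfrac12\|u^{i+1}-u^*\|^2_{Z_{i+1}(M_{i+1}+\Xi_{i+1})-Z_{i+2}M_{i+2}} + \langle V'_{i+1}(u^{i+1}), u^{i+1}-u^*\rangle_{Z_{i+1}} \ge -\Delta_{i+1}. \] Then for every $N\ge1$ with $\{u^0,\dots,u^N\}\subset\mathcal{U}$, \[ \tfrac12 \operatorname{dist}^2_{Z_{N+1}M_{N+1}}(u^N, H^{-1}(0)) \le \tfrac12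 \operatorname{dist}^2_{Z_1M_1}(u^0, H^{-1}(0)) + \sum_{i=0}^{N-1}\Delta_{i+1}. \]
   Context: For $T\in\mathcal{L}(U;U)$: $\langle x,z\rangle_T:=\langle Tx,z\rangle$, $\|x\|_T^2:=\langle Tx,x\rangle$, $\operatorname{dist}_T^2(z,A):=\inf_{u\in A}\|z-u\|_T^2$; $T\ge S$ means $T-S$ is positive semidefinite. For $T: U\rightrightarrows U$, $T^{-1}(w):=\{u : w\in T(u)\}$. Definition (partial strong submonotonicity): for $\Xi,N,M\in\mathcal{L}(U;U)$ with $M\ge0$, $T:U\rightrightarrows U$ is $(\Xi,N,M)$-partially strongly submonotone at $(\hat u,\hat w)\in\operatorname{graph}T$ if there is a neighbourhood $\mathcal{U}\ni\hat u$ such that \[ \inf_{u^*\in T^{-1}(\hat w)}\big(\langle w-\hat w, u-u^*\rangle_N + \|u-u^*\|^2_{M-\Xi}\big) \ge \operatorname{dist}^2_M(u, T^{-1}(\hat w)) \quad (u\in\mathcal{U},\ w\in T(u)). \] *)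

theory Defs
  imports "HOL-Analysis.Analysis"
begin

text \<open>Bounded linear operators on U are represented by functions with bounded_linear.\<close>

definition innerT :: "('a::real_inner \<Rightarrow> 'a) \<Rightarrow> 'a \<Rightarrow> 'a \<Rightarrow> real" where
  "innerT T x z = inner (T x) z"

definition normT2 :: "('a::real_inner \<Rightarrow> 'a) \<Rightarrow> 'a \<Rightarrow> real" where
  "normT2 T x = inner (T x) x"

definition distT2 :: "('a::real_inner \<Rightarrow> 'a) \<Rightarrow> 'a \<Rightarrow> 'a set \<Rightarrow> real" where
  "distT2 T z A = Inf ((\<lambda>u. normT2 T (z - u)) ` A)"

definition psd :: "('a::real_inner \<Rightarrow> 'a) \<Rightarrow> bool" where
  "psd T \<longleftrightarrow> (\<forall>x. 0 \<le> inner (T x) x)"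

definition selfadjoint :: "('a::real_inner \<Rightarrow> 'a) \<Rightarrow> bool" where
  "selfadjoint T \<longleftrightarrow> (\<forall>x y. inner (T x) y = inner x (T y))"

definition inv_map :: "('a \<Rightarrow> 'b set) \<Rightarrow> 'b \<Rightarrow> 'a set" where
  "inv_map T w = {u. w \<in> T u}"

text \<open>The submonotonicity inequality on a given set Uset
  (inf over T^{-1}(what) \<ge> c written as: every element of the set is \<ge> c).\<close>
definition psub_on ::
  "('a::real_inner \<Rightarrow> 'a) \<Rightarrow> ('a \<Rightarrow> 'a) \<Rightarrow> ('a \<Rightarrow> 'a) \<Rightarrow> ('a \<Rightarrow> 'a set) \<Rightarrow> 'a \<Rightarrow> 'a \<Rightarrow> 'a set \<Rightarrow> bool" where
  "psub_on Xi N M T uh wh Uset \<longleftrightarrow>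
     (\<forall>u\<in>Uset. \<forall>w\<in>T u. \<forall>us\<in>inv_map T wh.
        innerT N (w - wh) (u - us) + normT2 (\<lambda>x. M x - Xi x) (u - us)
          \<ge> distT2 M u (inv_map T wh))"

definition is_nhd :: "'a::topological_space set \<Rightarrow> 'a \<Rightarrow> bool" where
  "is_nhd S x \<longleftrightarrow> (\<exists>S0. open S0 \<and> x \<in> S0 \<and> S0 \<subseteq> S)"

definition psubmono ::
  "('a::real_inner \<Rightarrow> 'a) \<Rightarrow> ('a \<Rightarrow> 'a) \<Rightarrow> ('a \<Rightarrow> 'a) \<Rightarrow> ('a \<Rightarrow> 'a set) \<Rightarrow> 'a \<Rightarrow> 'a \<Rightarrow> bool" where
  "psubmono Xi N M T uh wh \<longleftrightarrow>
     bounded_linear Xi \<and> bounded_linear N \<and> bounded_linear M \<and> psd M \<and> wh \<in> T uh \<and>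
     (\<exists>Uset. is_nhd Uset uh \<and> psub_on Xi N M T uh wh Uset)"

end

theory Submission
  imports Defs
begin

lemma aux3: "(P::real) = Q - 2 * X + R \<Longrightarrow> X = (1/2) * R + (1/2) * Q - (1/2) * P" by linarith

lemma auxmain: "(0::real) = r1 + r2 + r3 \<Longrightarrow> r3 = (1/2) * r4 + (1/2) * r5 - (1/2) * r6 \<Longrightarrow>
   - r7 \<le> (1/2) * r4 + (1/2) * (r5 + r8 - r9) + r2 \<Longrightarrow> r10 \<le> 2 * r1 + r9 - r8 \<Longrightarrow> r10 - 2 * r7 \<le> r6"
  by argo

lemma three_point:
  fixes A :: "'a::real_inner \<Rightarrow> 'a"
  assumes "linear A" "selfadjoint A"
  shows "inner (A (a - b)) (a - c) = (1/2) * inner (A (a - b)) (a - b)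
     + (1/2) * inner (A (a - c)) (a - c) - (1/2) * inner (A (b - c)) (b - c)"
proof -
  have bc: "b - c = (a - c) - (a - b)" by simp
  have sym: "inner (A (a - c)) (a - b) = inner (A (a - b)) (a - c)"
    using assms(2) unfolding selfadjoint_def by (metis inner_commute)
  have "inner (A (b - c)) (b - c) = inner (A (a - c)) (a - c) - inner (A (a - c)) (a - b)
        - inner (A (a - b)) (a - c) + inner (A (a - b)) (a - b)"
    unfolding bc using linear_diff[OF assms(1)]
    by (simp add: inner_diff_left inner_diff_right)
  then show ?thesis using sym by (intro aux3) simp
qed

theorem corollary3p8:
  fixes H :: "'a::{real_inner, complete_space} \<Rightarrow> 'a set"
    and V :: "nat \<Rightarrow> 'a \<Rightarrow> 'a"
    and M W Z Xi :: "nat \<Rightarrow> 'a \<Rightarrow> 'a"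
    and u :: "nat \<Rightarrow> 'a"
    and uh :: 'a
    and Uset :: "'a set"
    and Delta :: "nat \<Rightarrow> real"
  assumes Hne: "inv_map H 0 \<noteq> {}"
    and lin: "\<And>i. bounded_linear (M (Suc i)) \<and> bounded_linear (W (Suc i))
                  \<and> bounded_linear (Z (Suc i)) \<and> bounded_linear (Xi (Suc i))"
    and sa: "\<And>i. selfadjoint (Z (Suc i) \<circ> M (Suc i))"
    and pos: "\<And>i. psd (Z (Suc i) \<circ> M (Suc i))"
    and iter: "\<And>i. \<exists>w\<in>H (u (Suc i)).
                 0 = W (Suc i) w + V (Suc i) (u (Suc i)) + M (Suc i) (u (Suc i) - u i)"
    and uh: "uh \<in> inv_map H 0"
    and nhd: "is_nhd Uset uh"
    and sub: "\<And>i. psubmono (Z (Suc i) \<circ> Xi (Suc i)) (\<lambda>x. 2 *\<^sub>R Z (Suc i) (W (Suc i) x))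
                  (Z (Suc (Suc i)) \<circ> M (Suc (Suc i))) H uh 0
               \<and> psub_on (Z (Suc i) \<circ> Xi (Suc i)) (\<lambda>x. 2 *\<^sub>R Z (Suc i) (W (Suc i) x))
                  (Z (Suc (Suc i)) \<circ> M (Suc (Suc i))) H uh 0 Uset"
    and Delta: "\<And>i us. us \<in> inv_map H 0 \<Longrightarrow>
        (1/2) * normT2 (Z (Suc i) \<circ> M (Suc i)) (u (Suc i) - u i)
      + (1/2) * normT2 (\<lambda>x. Z (Suc i) (M (Suc i) x + Xi (Suc i) x) - Z (Suc (Suc i)) (M (Suc (Suc i)) x))
                  (u (Suc i) - us)
      + innerT (Z (Suc i)) (V (Suc i) (u (Suc i))) (u (Suc i) - us) \<ge> - Delta (Suc i)"
  shows "\<forall>N\<ge>1. u ` {0..N} \<subseteq> Uset \<longrightarrow>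
     (1/2) * distT2 (Z (Suc N) \<circ> M (Suc N)) (u N) (inv_map H 0)
       \<le> (1/2) * distT2 (Z 1 \<circ> M 1) (u 0) (inv_map H 0) + (\<Sum>i<N. Delta (Suc i))"
proof -
  define S where "S = inv_map H 0"
  have stepi: "(1/2) * distT2 (Z (Suc (Suc i)) \<circ> M (Suc (Suc i))) (u (Suc i)) S
     \<le> (1/2) * distT2 (Z (Suc i) \<circ> M (Suc i)) (u i) S + Delta (Suc i)"
    if uin: "u (Suc i) \<in> Uset" for i
  proof -
    obtain w where w: "w \<in> H (u (Suc i))"
      and eq: "0 = W (Suc i) w + V (Suc i) (u (Suc i)) + M (Suc i) (u (Suc i) - u i)"
      using iter by blast
    define Zl where "Zl = Z (Suc i)"
    define A where "A = Z (Suc i) \<circ> M (Suc i)"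
    define A' where "A' = Z (Suc (Suc i)) \<circ> M (Suc (Suc i))"
    have lZ: "linear Zl" using lin[of i] unfolding Zl_def using bounded_linear.linear by blast
    have lA: "linear A" using lin[of i] unfolding A_def
      by (meson bounded_linear.linear bounded_linear_compose comp_def linear_compose)
    have lA': "linear A'" using lin[of "Suc i"] unfolding A'_def
      by (meson bounded_linear.linear linear_compose)
    have key: "distT2 A' (u (Suc i)) S - 2 * Delta (Suc i) \<le> normT2 A (u i - us)"
      if us: "us \<in> S" for us
    proof -
      define d where "d = u (Suc i) - us"
      have "Zl 0 = Zl (W (Suc i) w) + Zl (V (Suc i) (u (Suc i))) + A (u (Suc i) - u i)"
        unfolding A_def Zl_def[symmetric] using eq linear_add[OF lZ] by (metis comp_apply)
      hence e0: "0 = inner (Zl (W (Suc i) w)) d + inner (Zl (V (Suc i) (u (Suc i)))) d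
          + inner (A (u (Suc i) - u i)) d"
        using linear_0[OF lZ] by (metis inner_add_left inner_zero_left)
      have e1: "inner (A (u (Suc i) - u i)) d = (1/2) * normT2 A (u (Suc i) - u i)
          + (1/2) * normT2 A d - (1/2) * normT2 A (u i - us)"
        unfolding d_def normT2_def using three_point[OF lA sa[of i, folded A_def]] by blast
      have e2a: "(\<lambda>x. Z (Suc i) (M (Suc i) x + Xi (Suc i) x) - Z (Suc (Suc i)) (M (Suc (Suc i)) x)) d
          = A d + Zl (Xi (Suc i) d) - A' d"
        unfolding A_def A'_def Zl_def using linear_add[OF lZ[unfolded Zl_def]] by simp
      have e2: "normT2 (\<lambda>x. Z (Suc i) (M (Suc i) x + Xi (Suc i) x) - Z (Suc (Suc i)) (M (Suc (Suc i)) x)) d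
          = normT2 A d + inner (Zl (Xi (Suc i) d)) d - normT2 A' d"
        unfolding normT2_def e2a by (simp add: inner_diff_left inner_add_left)
      have dl: "(1/2) * normT2 A (u (Suc i) - u i) + (1/2) * (normT2 A d + inner (Zl (Xi (Suc i) d)) d - normT2 A' d)
          + inner (Zl (V (Suc i) (u (Suc i)))) d \<ge> - Delta (Suc i)"
        using Delta[of us i] us unfolding S_def A_def[symmetric] d_def[symmetric] e2 innerT_def Zl_def
        by simp
      have ps: "psub_on (Z (Suc i) \<circ> Xi (Suc i)) (\<lambda>x. 2 *\<^sub>R Z (Suc i) (W (Suc i) x))
                  A' H uh 0 Uset" using sub[of i] unfolding A'_def by blast
      have e3: "innerT (\<lambda>x. 2 *\<^sub>R Z (Suc i) (W (Suc i) x)) (w - 0) d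
          + normT2 (\<lambda>x. A' x - (Z (Suc i) \<circ> Xi (Suc i)) x) d \<ge> distT2 A' (u (Suc i)) S"
        using ps uin w us unfolding psub_on_def S_def d_def inv_map_def by blast
      have e3': "2 * inner (Zl (W (Suc i) w)) d + normT2 A' d - inner (Zl (Xi (Suc i) d)) d
          \<ge> distT2 A' (u (Suc i)) S"
        using e3 unfolding innerT_def normT2_def Zl_def by (simp add: inner_diff_left)
      show ?thesis by (rule auxmain[OF e0 e1 dl e3'])
    qed
    have "distT2 A' (u (Suc i)) S - 2 * Delta (Suc i) \<le> distT2 A (u i) S"
      unfolding distT2_def[of A] using Hne key unfolding S_def[symmetric]
      by (intro cINF_greatest) auto
    thus ?thesis unfolding A_def A'_def by linarith
  qed
  have "u ` {0..N} \<subseteq> Uset \<longrightarrow>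
     (1/2) * distT2 (Z (Suc N) \<circ> M (Suc N)) (u N) S
       \<le> (1/2) * distT2 (Z 1 \<circ> M 1) (u 0) S + (\<Sum>i<N. Delta (Suc i))" for N
  proof (induction N)
    case 0
    then show ?case by simp
  next
    case (Suc N)
    show ?case
    proof
      assume a: "u ` {0..Suc N} \<subseteq> Uset"
      hence "u ` {0..N} \<subseteq> Uset" by auto
      with Suc have ih: "(1/2) * distT2 (Z (Suc N) \<circ> M (Suc N)) (u N) S
       \<le> (1/2) * distT2 (Z 1 \<circ> M 1) (u 0) S + (\<Sum>i<N. Delta (Suc i))" by blast
      have "u (Suc N) \<in> Uset" using a by auto
      from stepi[OF this] ih show "(1/2) * distT2 (Z (Suc (Suc N)) \<circ> M (Suc (Suc N))) (u (Suc N)) S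
       \<le> (1/2) * distT2 (Z 1 \<circ> M 1) (u 0) S + (\<Sum>i<Suc N. Delta (Suc i))" by simp
    qed
  qed
  thus ?thesis unfolding S_def by blast
qed

end
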